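(* For every $0<\lambda,\varepsilon\le1$ there exists $p_0=p_0(\lambda,\varepsilon)<1$ such that if $m,n\in\mathbb N$ satisfy $\lambda\log n\le m\le n$, then Bernoulli-$p$ bond percolation on the box $B(n,m)$ satisfies $\mathbb P_p(x\leftrightarrow y)\ge 1-\varepsilon$ for every $p\ge p_0$ and all $x,y\in B(n,m)$.
   Context: $B(n,m)=\{(x_1,x_2)\in\mathbb Z^2:|x_1|\le n,|x_2|\le m\}$, regarded as the subgraph of the square lattice $\mathbb Z^2$ induced by this set. Bernoulli-$p$ bond percolation keeps each edge independently with probability $p$; $\{x\leftrightarrow y\}$ is the event that $x$ and $y$ are joined by an open path. *)

theory Defs
  imports Complex_Main
begin

definition box :: "nat \<Rightarrow> nat \<Rightarrow> (int \<times> int) set" where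
  "box n m = {(a, b). \<bar>a\<bar> \<le> int n \<and> \<bar>b\<bar> \<le> int m}"

definition lattice_adj :: "int \<times> int \<Rightarrow> int \<times> int \<Rightarrow> bool" where
  "lattice_adj u v \<longleftrightarrow> \<bar>fst u - fst v\<bar> + \<bar>snd u - snd v\<bar> = 1"

definition box_edges :: "nat \<Rightarrow> nat \<Rightarrow> (int \<times> int) set set" where
  "box_edges n m = {{u, v} | u v. u \<in> box n m \<and> v \<in> box n m \<and> lattice_adj u v}"

definition joined :: "'a set set \<Rightarrow> 'a \<Rightarrow> 'a \<Rightarrow> bool" where
  "joined S x y \<longleftrightarrow> (x, y) \<in> {(u, v). {u, v} \<in> S}\<^sup>*"

text \<open>Probability of an event (a predicate on the set of open edges) under Bernoulli-p
  bond percolation on the finite edge set E: each edge open independently with probability p.\<close>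
definition perc_prob :: "real \<Rightarrow> 'e set \<Rightarrow> ('e set \<Rightarrow> bool) \<Rightarrow> real" where
  "perc_prob p E A = (\<Sum>S \<in> {S. S \<subseteq> E \<and> A S}. p ^ card S * (1 - p) ^ card (E - S))"

end

theory Submission
  imports Defs
begin


type_synonym code = "(int \<times> int) \<times> bool"

definition oth :: "code \<Rightarrow> int \<times> int" where
  "oth e = (if snd e then (fst (fst e) + 1, snd (fst e)) else (fst (fst e), snd (fst e) + 1))"

definition Rc :: "code \<Rightarrow> code \<Rightarrow> bool" where
  "Rc e e' \<longleftrightarrow> \<bar>fst (fst e) - fst (fst e')\<bar> \<le> 1 \<and> \<bar>snd (fst e) - snd (fst e')\<bar> \<le> 1"

definition fe :: "code set \<Rightarrow> int \<times> int \<Rightarrow> bool" where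
  "fe C f \<longleftrightarrow> (((f,True) \<in> C) = (((fst f, snd f + 1),True) \<in> C))
      = (((f,False) \<in> C) = (((fst f + 1, snd f),False) \<in> C))"

fun par :: "code set \<Rightarrow> code list \<Rightarrow> bool" where
  "par C [] = False"
| "par C (e # es) = ((e \<in> C) \<noteq> par C es)"

lemma par_append: "par C (xs @ ys) = (par C xs \<noteq> par C ys)"
  by (induction xs) auto

definition canon :: "nat \<Rightarrow> nat \<Rightarrow> int \<times> int \<Rightarrow> code list" where
  "canon n m v = map (\<lambda>a. ((a, - int m), True)) [- int n..fst v - 1]
               @ map (\<lambda>b. ((fst v, b), False)) [- int m..snd v - 1]"

definition sig :: "nat \<Rightarrow> nat \<Rightarrow> code set \<Rightarrow> int \<times> int \<Rightarrow> bool" where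
  "sig n m C v = par C (canon n m v)"

lemma sig_up:
  assumes "- int m \<le> j"
  shows "sig n m C (i, j + 1) = (sig n m C (i, j) \<noteq> (((i, j), False) \<in> C))"
proof -
  have "[- int m..j] = [- int m..j - 1] @ [j]" using assms by (rule upto_rec2)
  then show ?thesis by (simp add: sig_def canon_def par_append) blast
qed

lemma sig_right_base:
  assumes "- int n \<le> i"
  shows "sig n m C (i + 1, - int m) = (sig n m C (i, - int m) \<noteq> (((i, - int m), True) \<in> C))"
proof -
  have "[- int n..i] = [- int n..i - 1] @ [i]" using assms by (rule upto_rec2)
  then show ?thesis by (simp add: sig_def canon_def par_append)
qed

lemma sig_right:
  assumes fe: "\<And>a b. - int n \<le> a \<Longrightarrow> a < int n \<Longrightarrow> - int m \<le> b \<Longrightarrow> b < int m \<Longrightarrow> fe C (a, b)"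
    and i: "- int n \<le> i" "i < int n" and j: "- int m \<le> j" "j \<le> int m"
  shows "sig n m C (i + 1, j) = (sig n m C (i, j) \<noteq> (((i, j), True) \<in> C))"
proof -
  obtain k where k: "j = - int m + int k" using j(1) by (metis add.commute add_diff_cancel_left' zero_le_imp_eq_int le_add_diff_inverse2 diff_ge_0_iff_ge)
  have "\<forall>j. j = - int m + int k \<longrightarrow> j \<le> int m \<longrightarrow> sig n m C (i + 1, j) = (sig n m C (i, j) \<noteq> (((i, j), True) \<in> C))"
  proof (induction k)
    case 0
    then show ?case using sig_right_base[OF i(1)] by simp
  next
    case (Suc k)
    show ?case
    proof (intro allI impI)
      fix j assume j1: "j = - int m + int (Suc k)" and j2: "j \<le> int m"
      define j0 where "j0 = j - 1"
      have j0: "j = j0 + 1" "- int m \<le> j0" "j0 < int m" using j1 j2 by (auto simp: j0_def)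
      have IH: "sig n m C (i + 1, j0) = (sig n m C (i, j0) \<noteq> (((i, j0), True) \<in> C))"
        using Suc.IH j0 j1 by auto
      have F: "fe C (i, j0)" using fe i j0 by auto
      show "sig n m C (i + 1, j) = (sig n m C (i, j) \<noteq> (((i, j), True) \<in> C))"
        using IH F sig_up[OF j0(2), of n C i] sig_up[OF j0(2), of n C "i+1"] unfolding j0(1) fe_def
        by auto
    qed
  qed
  then show ?thesis using k j by auto
qed

definition bc :: "nat \<Rightarrow> nat \<Rightarrow> code set" where
  "bc n m = {e. fst e \<in> box n m \<and> oth e \<in> box n m}"

definition FE :: "nat \<Rightarrow> nat \<Rightarrow> code set \<Rightarrow> bool" where
  "FE n m C \<longleftrightarrow> (\<forall>a b. - int n \<le> a \<longrightarrow> a < int n \<longrightarrow> - int m \<le> b \<longrightarrow> b < int m \<longrightarrow> fe C (a, b))"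

lemma sig_pot:
  assumes "FE n m C" "e \<in> bc n m"
  shows "(sig n m C (fst e) \<noteq> sig n m C (oth e)) = (e \<in> C)"
proof -
  obtain i j b where e: "e = ((i, j), b)" by (metis prod.collapse)
  show ?thesis
  proof (cases b)
    case True
    then have "- int n \<le> i" "i < int n" "- int m \<le> j" "j \<le> int m"
      using assms(2) by (auto simp: bc_def box_def oth_def e)
    then show ?thesis using sig_right[of n m C i j] assms(1) True
      by (auto simp: e oth_def FE_def)
  next
    case False
    then have "- int m \<le> j"
      using assms(2) by (auto simp: bc_def box_def oth_def e)
    then show ?thesis using sig_up[of m j n C i] False
      by (auto simp: e oth_def)
  qed
qed

definition RD :: "code set \<Rightarrow> (code \<times> code) set" where
  "RD D = {(a, b). a \<in> D \<and> b \<in> D \<and> Rc a b}"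

definition conn :: "code set \<Rightarrow> bool" where
  "conn C \<longleftrightarrow> (\<exists>e0\<in>C. \<forall>e\<in>C. (e0, e) \<in> (RD C)\<^sup>*)"

lemma par_split: "C0 \<subseteq> D \<Longrightarrow> par D l = (par C0 l \<noteq> par (D - C0) l)"
  by (induction l) auto

lemma sig_split: "C0 \<subseteq> D \<Longrightarrow> sig n m D v = (sig n m C0 v \<noteq> sig n m (D - C0) v)"
  unfolding sig_def by (rule par_split)

lemma sig_empty: "sig n m {} v = False"
proof -
  have "par {} l = False" for l by (induction l) auto
  then show ?thesis by (simp add: sig_def)
qed

lemma fe_comp:
  assumes "fe D f" "C0 \<subseteq> D"
    and cl: "\<And>c c'. c \<in> C0 \<Longrightarrow> c' \<in> D \<Longrightarrow> Rc c c' \<Longrightarrow> c' \<in> C0"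
  shows "fe C0 f"
proof -
  obtain a b where f: "f = (a, b)" by (metis prod.collapse)
  define c1 where "c1 = ((a, b), True)"
  define c2 where "c2 = ((a, b + 1), True)"
  define c3 where "c3 = ((a, b), False)"
  define c4 where "c4 = ((a + 1, b), False)"
  have R: "Rc c c'" if "c \<in> {c1,c2,c3,c4}" "c' \<in> {c1,c2,c3,c4}" for c c'
    using that by (auto simp: Rc_def c1_def c2_def c3_def c4_def)
  have fD: "((c1 \<in> D) = (c2 \<in> D)) = ((c3 \<in> D) = (c4 \<in> D))"
    using assms(1) by (simp add: fe_def f c1_def c2_def c3_def c4_def)
  have "((c1 \<in> C0) = (c2 \<in> C0)) = ((c3 \<in> C0) = (c4 \<in> C0))"
  proof (cases "\<exists>c\<in>{c1,c2,c3,c4}. c \<in> C0")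
    case True
    then obtain c where c: "c \<in> {c1,c2,c3,c4}" "c \<in> C0" by blast
    have "c' \<in> C0 \<longleftrightarrow> c' \<in> D" if "c' \<in> {c1,c2,c3,c4}" for c'
      using cl[OF c(2) _ R[OF c(1) that]] assms(2) by blast
    then show ?thesis using fD by auto
  next
    case False
    then show ?thesis by auto
  qed
  then show ?thesis by (simp add: fe_def f c1_def c2_def c3_def c4_def)
qed

lemma fe_diff:
  assumes "fe D f" "fe C0 f" "C0 \<subseteq> D"
  shows "fe (D - C0) f"
  using assms unfolding fe_def by auto

lemma decomp:
  "finite D \<Longrightarrow> FE n m D \<Longrightarrow> sig n m D x \<noteq> sig n m D y \<Longrightarrow>
     \<exists>C\<subseteq>D. conn C \<and> FE n m C \<and> sig n m C x \<noteq> sig n m C y"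
proof (induction "card D" arbitrary: D rule: less_induct)
  case less
  have "D \<noteq> {}"
  proof
    assume "D = {}"
    then show False using less.prems(3) by (simp add: sig_empty)
  qed
  then obtain e0 where e0: "e0 \<in> D" by blast
  define C0 where "C0 = {e \<in> D. (e0, e) \<in> (RD D)\<^sup>*}"
  have C0D: "C0 \<subseteq> D" by (auto simp: C0_def)
  have cl: "c' \<in> C0" if "c \<in> C0" "c' \<in> D" "Rc c c'" for c c'
  proof -
    have "(c, c') \<in> RD D" using that C0D by (auto simp: RD_def)
    then show ?thesis using that by (auto simp: C0_def intro: rtrancl_into_rtrancl)
  qed
  have FE0: "FE n m C0" unfolding FE_def
  proof (intro allI impI)
    fix a b assume "- int n \<le> a" "a < int n" "- int m \<le> b" "b < int m"
    then have "fe D (a, b)" using less.prems(2) by (simp add: FE_def)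
    then show "fe C0 (a, b)" using C0D cl by (rule fe_comp)
  qed
  have FE1: "FE n m (D - C0)" unfolding FE_def
  proof (intro allI impI)
    fix a b assume "- int n \<le> a" "a < int n" "- int m \<le> b" "b < int m"
    then have "fe D (a, b)" "fe C0 (a, b)" using less.prems(2) FE0 by (simp_all add: FE_def)
    then show "fe (D - C0) (a, b)" using C0D by (rule fe_diff)
  qed
  have sub: "(e0, e) \<in> (RD C0)\<^sup>*" if "(e0, e) \<in> (RD D)\<^sup>*" for e
    using that
  proof (induction rule: rtrancl_induct)
    case base then show ?case by simp
  next
    case (step b c)
    have bD: "b \<in> D" "c \<in> D" using step(2) by (auto simp: RD_def)
    have "(e0, c) \<in> (RD D)\<^sup>*" using step(1,2) by (rule rtrancl_into_rtrancl)
    then have "b \<in> C0" "c \<in> C0" using bD step(1) by (auto simp: C0_def)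
    then have "(b, c) \<in> RD C0" using step(2) by (auto simp: RD_def)
    then show ?case using step(3) by (simp add: rtrancl_into_rtrancl)
  qed
  have e0C: "e0 \<in> C0" using e0 by (simp add: C0_def)
  have conn0: "conn C0" unfolding conn_def
  proof (rule bexI[OF _ e0C], intro ballI)
    fix e assume "e \<in> C0"
    then have "(e0, e) \<in> (RD D)\<^sup>*" by (simp add: C0_def)
    then show "(e0, e) \<in> (RD C0)\<^sup>*" by (rule sub)
  qed
  show ?case
  proof (cases "sig n m C0 x \<noteq> sig n m C0 y")
    case True
    then show ?thesis using conn0 FE0 C0D by (intro exI[of _ C0]) simp
  next
    case False
    then have s1: "sig n m (D - C0) x \<noteq> sig n m (D - C0) y"
      using less.prems(3) sig_split[OF C0D, of n m x] sig_split[OF C0D, of n m y] by auto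
    have "e0 \<in> C0" using e0C .
    then have "D - C0 \<subset> D" using e0 C0D by blast
    then have "card (D - C0) < card D" using less.prems(1) by (rule psubset_card_mono[rotated])
    moreover have "finite (D - C0)" using less.prems(1) by simp
    ultimately have "\<exists>C\<subseteq>D - C0. conn C \<and> FE n m C \<and> sig n m C x \<noteq> sig n m C y"
      using FE1 s1 by (rule less.hyps)
    then show ?thesis by auto
  qed
qed



lemma exit_step:
  assumes "(a, b) \<in> r\<^sup>*" "a \<in> T" "b \<notin> T"
  shows "\<exists>u v. u \<in> T \<and> v \<notin> T \<and> (u, v) \<in> r"
  using assms
proof (induction rule: rtrancl_induct)
  case base then show ?case by simp
next
  case (step b c)
  show ?case
  proof (cases "b \<in> T")
    case True then show ?thesis using step by blast
  next
    case False then show ?thesis using step by blast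
  qed
qed

lemma Rc_sym: "Rc a b = Rc b a"
  by (auto simp: Rc_def abs_minus_commute)

lemma succ_insert:
  assumes "successively Rc (w1 @ u # w2)" "Rc u v"
  shows "successively Rc (w1 @ u # v # u # w2)"
proof -
  have "Rc v u" using assms(2) Rc_sym by blast
  then show ?thesis using assms
    by (auto simp: successively_append_iff successively_Cons)
qed

lemma cover:
  assumes fin: "finite C" and e0: "e0 \<in> C" and cn: "\<forall>e\<in>C. (e0, e) \<in> (RD C)\<^sup>*"
  shows "\<exists>w. w \<noteq> [] \<and> hd w = e0 \<and> set w = C \<and> successively Rc w \<and> length w + 1 \<le> 2 * card C"
proof -
  have main: "1 \<le> k \<Longrightarrow> k \<le> card C \<Longrightarrow> (\<exists>w. w \<noteq> [] \<and> hd w = e0 \<and> set w \<subseteq> C \<and> card (set w) = k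
      \<and> successively Rc w \<and> length w + 1 \<le> 2 * k)" for k
  proof (induction k)
    case 0 then show ?case by simp
  next
    case (Suc k)
    show ?case
    proof (cases "k = 0")
      case True
      then show ?thesis using e0 by (intro exI[of _ "[e0]"]) auto
    next
      case False
      then obtain w where w: "w \<noteq> []" "hd w = e0" "set w \<subseteq> C" "card (set w) = k"
        "successively Rc w" "length w + 1 \<le> 2 * k"
        using Suc by auto
      have "set w \<noteq> C" using w(4) Suc.prems(2) by auto
      then obtain e where e: "e \<in> C" "e \<notin> set w" using w(3) by blast
      have e0w: "e0 \<in> set w" using w(1,2) by (metis list.set_sel(1))
      obtain u v where uv: "u \<in> set w" "v \<notin> set w" "(u, v) \<in> RD C"
        using exit_step[OF cn[rule_format, OF e(1)] e0w e(2)] by blast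
      have vC: "v \<in> C" and Ruv: "Rc u v" using uv(3) by (auto simp: RD_def)
      obtain w1 w2 where sp: "w = w1 @ u # w2" using uv(1) by (metis split_list)
      define w' where "w' = w1 @ u # v # u # w2"
      have "w' \<noteq> []" by (simp add: w'_def)
      moreover have "hd w' = e0" using w(2) by (cases w1) (auto simp: w'_def sp)
      moreover have sw: "set w' = insert v (set w)" by (auto simp: w'_def sp)
      moreover have "set w' \<subseteq> C" using sw w(3) vC by auto
      moreover have "card (set w') = Suc k" using sw uv(2) w(4) by simp
      moreover have "successively Rc w'" unfolding w'_def
        using succ_insert[OF _ Ruv] w(5) sp by simp
      moreover have "length w' + 1 \<le> 2 * Suc k" using w(6) by (simp add: w'_def sp)
      ultimately show ?thesis by blast
    qed
  qed
  have "1 \<le> card C" using fin e0 by (metis One_nat_def Suc_leI card_gt_0_iff empty_iff)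
  then obtain w where w: "w \<noteq> []" "hd w = e0" "set w \<subseteq> C" "card (set w) = card C"
    "successively Rc w" "length w + 1 \<le> 2 * card C"
    using main by blast
  have "set w = C" using w(3,4) fin by (simp add: card_subset_eq)
  then show ?thesis using w by blast
qed

lemma walk_loc:
  "successively Rc (e0 # ws) \<Longrightarrow> e \<in> set (e0 # ws) \<Longrightarrow>
    \<bar>fst (fst e) - fst (fst e0)\<bar> \<le> int (length ws) \<and> \<bar>snd (fst e) - snd (fst e0)\<bar> \<le> int (length ws)"
proof (induction ws arbitrary: e0)
  case Nil then show ?case by simp
next
  case (Cons e1 ws)
  have R: "Rc e0 e1" and S: "successively Rc (e1 # ws)" using Cons.prems(1) by auto
  show ?case
  proof (cases "e = e0")
    case True then show ?thesis by simp
  next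
    case False
    then have "e \<in> set (e1 # ws)" using Cons.prems(2) by simp
    then have "\<bar>fst (fst e) - fst (fst e1)\<bar> \<le> int (length ws) \<and> \<bar>snd (fst e) - snd (fst e1)\<bar> \<le> int (length ws)"
      using Cons.IH[OF S] by blast
    then show ?thesis using R by (auto simp: Rc_def)
  qed
qed



definition Wrel :: "(int \<times> int) set \<Rightarrow> ((int \<times> int) \<times> (int \<times> int)) set" where
  "Wrel W = {(a, b). a \<in> W \<and> b \<in> W \<and> lattice_adj a b}"

lemma Wrel_sym: "(u, v) \<in> (Wrel W)\<^sup>* \<Longrightarrow> (v, u) \<in> (Wrel W)\<^sup>*"
proof -
  assume "(u, v) \<in> (Wrel W)\<^sup>*"
  then have "(v, u) \<in> ((Wrel W)\<inverse>)\<^sup>*" by (simp add: rtrancl_converseI)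
  moreover have "(Wrel W)\<inverse> = Wrel W"
    by (auto simp: Wrel_def lattice_adj_def abs_minus_commute)
  ultimately show ?thesis by simp
qed

lemma vseg0:
  "(\<forall>t. b \<le> t \<and> t \<le> b + int k \<longrightarrow> (a, t) \<in> W) \<Longrightarrow> ((a, b), (a, b + int k)) \<in> (Wrel W)\<^sup>*"
proof (induction k)
  case 0 then show ?case by simp
next
  case (Suc k)
  have "((a, b), (a, b + int k)) \<in> (Wrel W)\<^sup>*" using Suc by auto
  moreover have "((a, b + int k), (a, b + int (Suc k))) \<in> Wrel W"
    using Suc.prems by (auto simp: Wrel_def lattice_adj_def)
  ultimately show ?case by (rule rtrancl_into_rtrancl)
qed

lemma hseg0:
  "(\<forall>t. b \<le> t \<and> t \<le> b + int k \<longrightarrow> (t, a) \<in> W) \<Longrightarrow> ((b, a), (b + int k, a)) \<in> (Wrel W)\<^sup>*"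
proof (induction k)
  case 0 then show ?case by simp
next
  case (Suc k)
  have "((b, a), (b + int k, a)) \<in> (Wrel W)\<^sup>*" using Suc by auto
  moreover have "((b + int k, a), (b + int (Suc k), a)) \<in> Wrel W"
    using Suc.prems by (auto simp: Wrel_def lattice_adj_def)
  ultimately show ?case by (rule rtrancl_into_rtrancl)
qed

lemma vseg:
  assumes "\<forall>t. min b b' \<le> t \<and> t \<le> max b b' \<longrightarrow> (a, t) \<in> W"
  shows "((a, b), (a, b')) \<in> (Wrel W)\<^sup>*"
proof (cases "b \<le> b'")
  case True
  have "((a, b), (a, b + int (nat (b' - b)))) \<in> (Wrel W)\<^sup>*"
    using assms True by (intro vseg0) auto
  then show ?thesis using True by simp
next
  case False
  have "((a, b'), (a, b' + int (nat (b - b')))) \<in> (Wrel W)\<^sup>*"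
    using assms False by (intro vseg0) auto
  then show ?thesis using False by (auto intro: Wrel_sym)
qed

lemma hseg:
  assumes "\<forall>t. min b b' \<le> t \<and> t \<le> max b b' \<longrightarrow> (t, a) \<in> W"
  shows "((b, a), (b', a)) \<in> (Wrel W)\<^sup>*"
proof (cases "b \<le> b'")
  case True
  have "((b, a), (b + int (nat (b' - b)), a)) \<in> (Wrel W)\<^sup>*"
    using assms True by (intro hseg0) auto
  then show ?thesis using True by simp
next
  case False
  have "((b', a), (b' + int (nat (b - b')), a)) \<in> (Wrel W)\<^sup>*"
    using assms False by (intro hseg0) auto
  then show ?thesis using False by (auto intro: Wrel_sym)
qed

definition Wav :: "nat \<Rightarrow> nat \<Rightarrow> int \<times> int \<Rightarrow> int \<Rightarrow> (int \<times> int) set" where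
  "Wav n m z L = {v \<in> box n m. \<not> (\<bar>fst v - fst z\<bar> \<le> L \<and> \<bar>snd v - snd z\<bar> \<le> L)}"

lemma free_coord:
  assumes "\<bar>zz\<bar> \<le> int N" "L < int N"
  shows "\<exists>c. \<bar>c\<bar> \<le> int N \<and> \<bar>c - zz\<bar> > L"
proof (cases "zz + L + 1 \<le> int N")
  case True
  then show ?thesis using assms
    by (intro exI[of _ "if L < 0 then zz else zz + L + 1"]) auto
next
  case False
  then show ?thesis using assms
    by (intro exI[of _ "if L < 0 then zz else zz - L - 1"]) auto
qed

lemma to_hub:
  assumes v: "v \<in> Wav n m z L" and c0: "\<bar>c0\<bar> \<le> int n" "\<bar>c0 - fst z\<bar> > L"
    and r0: "\<bar>r0\<bar> \<le> int m" "\<bar>r0 - snd z\<bar> > L"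
  shows "(v, (c0, r0)) \<in> (Wrel (Wav n m z L))\<^sup>*"
proof -
  obtain v1 v2 where vv: "v = (v1, v2)" by (metis prod.collapse)
  have vb: "\<bar>v1\<bar> \<le> int n" "\<bar>v2\<bar> \<le> int m" using v by (auto simp: Wav_def box_def vv)
  show ?thesis
  proof (cases "\<bar>v1 - fst z\<bar> > L")
    case True
    have "((v1, v2), (v1, r0)) \<in> (Wrel (Wav n m z L))\<^sup>*"
      using True vb r0 by (intro vseg) (auto simp: Wav_def box_def)
    moreover have "((v1, r0), (c0, r0)) \<in> (Wrel (Wav n m z L))\<^sup>*"
      using vb r0 c0 by (intro hseg) (auto simp: Wav_def box_def)
    ultimately show ?thesis unfolding vv by (rule rtrancl_trans)
  next
    case False
    then have F: "\<bar>v2 - snd z\<bar> > L" using v by (auto simp: Wav_def vv)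
    have "((v1, v2), (c0, v2)) \<in> (Wrel (Wav n m z L))\<^sup>*"
      using F vb c0 by (intro hseg) (auto simp: Wav_def box_def)
    moreover have "((c0, v2), (c0, r0)) \<in> (Wrel (Wav n m z L))\<^sup>*"
      using vb r0 c0 by (intro vseg) (auto simp: Wav_def box_def)
    ultimately show ?thesis unfolding vv by (rule rtrancl_trans)
  qed
qed

lemma avoid:
  assumes z: "z \<in> box n m" and L: "L < int m" "m \<le> n"
    and x: "x \<in> Wav n m z L" and y: "y \<in> Wav n m z L"
  shows "(x, y) \<in> (Wrel (Wav n m z L))\<^sup>*"
proof -
  obtain c0 where c0: "\<bar>c0\<bar> \<le> int n" "\<bar>c0 - fst z\<bar> > L"
    using free_coord[of "fst z" n L] z L by (auto simp: box_def)
  obtain r0 where r0: "\<bar>r0\<bar> \<le> int m" "\<bar>r0 - snd z\<bar> > L"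
    using free_coord[of "snd z" m L] z L by (auto simp: box_def)
  have "(x, (c0, r0)) \<in> (Wrel (Wav n m z L))\<^sup>*" using to_hub[OF x c0 r0] .
  moreover have "(y, (c0, r0)) \<in> (Wrel (Wav n m z L))\<^sup>*" using to_hub[OF y c0 r0] .
  ultimately show ?thesis by (meson Wrel_sym rtrancl_trans)
qed

lemma box_conn:
  assumes "x \<in> box n m" "y \<in> box n m" "m \<le> n"
  shows "(x, y) \<in> (Wrel (box n m))\<^sup>*"
proof -
  have W: "Wav n m (0,0) (-1) = box n m" by (auto simp: Wav_def)
  have "(0::int, 0::int) \<in> box n m" by (simp add: box_def)
  then show ?thesis using avoid[of "(0,0)" n m "-1" x y] assms W by auto
qed



lemma prob_avoid:
  fixes p :: real and E F :: "'e set"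
  assumes fin: "finite E" and FE: "F \<subseteq> E"
  shows "(\<Sum>S\<in>{S. S \<subseteq> E \<and> S \<inter> F = {}}. p ^ card S * (1 - p) ^ card (E - S)) = (1 - p) ^ card F"
proof -
  have PA: "(\<Prod>e\<in>E. (if e \<in> F then 0 else p) + (1 - p)) =
      (\<Sum>X\<in>Pow E. (\<Prod>e\<in>X. (if e \<in> F then 0 else p)) * (\<Prod>e\<in>E - X. (1 - p)))"
    using fin by (rule prod_add)
  have L: "(\<Prod>e\<in>E. (if e \<in> F then 0 else p) + (1 - p)) = (1 - p) ^ card F"
  proof -
    have "(\<Prod>e\<in>E. (if e \<in> F then 0 else p) + (1 - p)) = (\<Prod>e\<in>E. if e \<in> F then 1 - p else 1)"
      by (rule prod.cong) auto
    also have "\<dots> = (\<Prod>e\<in>E \<inter> {e. e \<in> F}. 1 - p) * (\<Prod>e\<in>E \<inter> - {e. e \<in> F}. 1)"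
      using fin by (rule prod.If_cases)
    also have "E \<inter> {e. e \<in> F} = F" using FE by auto
    finally show ?thesis by simp
  qed
  have T: "(\<Prod>e\<in>X. (if e \<in> F then 0 else p)) * (\<Prod>e\<in>E - X. (1 - p)) =
      (if X \<inter> F = {} then p ^ card X * (1 - p) ^ card (E - X) else 0)" if X: "X \<in> Pow E" for X
  proof (cases "X \<inter> F = {}")
    case True
    then have "(\<Prod>e\<in>X. (if e \<in> F then 0 else p)) = (\<Prod>e\<in>X. p)" by (intro prod.cong) auto
    then show ?thesis using True by simp
  next
    case False
    then obtain e where e: "e \<in> X" "e \<in> F" by blast
    have "finite X" using X fin finite_subset by auto
    then have "(\<Prod>e\<in>X. (if e \<in> F then 0 else p)) = 0" using e by (intro prod_zero) auto
    then show ?thesis using False by simp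
  qed
  have "(\<Sum>X\<in>Pow E. (\<Prod>e\<in>X. (if e \<in> F then 0 else p)) * (\<Prod>e\<in>E - X. (1 - p))) =
        (\<Sum>X\<in>Pow E. (if X \<inter> F = {} then p ^ card X * (1 - p) ^ card (E - X) else 0))"
    using T by (rule sum.cong[OF refl])
  also have "\<dots> = (\<Sum>X\<in>{X \<in> Pow E. X \<inter> F = {}}. p ^ card X * (1 - p) ^ card (E - X))"
    using fin by (subst sum.inter_filter) auto
  also have "{X \<in> Pow E. X \<inter> F = {}} = {S. S \<subseteq> E \<and> S \<inter> F = {}}" by auto
  finally show ?thesis using PA L by simp
qed

lemma perc_compl:
  fixes p :: real
  assumes "finite E"
  shows "perc_prob p E A = 1 - perc_prob p E (\<lambda>S. \<not> A S)"
proof -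
  have "perc_prob p E A + perc_prob p E (\<lambda>S. \<not> A S) =
     (\<Sum>S\<in>{S. S \<subseteq> E \<and> A S} \<union> {S. S \<subseteq> E \<and> \<not> A S}. p ^ card S * (1 - p) ^ card (E - S))"
    unfolding perc_prob_def
    by (rule sum.union_disjoint[symmetric]) (use assms in auto)
  also have "{S. S \<subseteq> E \<and> A S} \<union> {S. S \<subseteq> E \<and> \<not> A S} = {S. S \<subseteq> E \<and> S \<inter> {} = {}}" by auto
  also have "(\<Sum>S\<in>{S. S \<subseteq> E \<and> S \<inter> {} = {}}. p ^ card S * (1 - p) ^ card (E - S)) = 1"
    using prob_avoid[OF assms, of "{}" p] by simp
  finally show ?thesis by simp
qed

lemma sum_union_bound:
  fixes f :: "'a \<Rightarrow> real"
  assumes I: "finite I" and A: "\<And>i. i \<in> I \<Longrightarrow> finite (A i)"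
    and B: "B \<subseteq> (\<Union>i\<in>I. A i)" and f: "\<And>x. 0 \<le> f x"
  shows "sum f B \<le> (\<Sum>i\<in>I. sum f (A i))"
proof -
  have fU: "finite (\<Union>i\<in>I. A i)" using I A by auto
  have "sum f B \<le> sum f (\<Union>i\<in>I. A i)" using fU B f by (intro sum_mono2) auto
  also have "\<dots> \<le> (\<Sum>i\<in>I. sum f (A i))"
    using I A
  proof (induction I rule: finite_induct)
    case empty then show ?case by simp
  next
    case (insert i I)
    have "sum f (\<Union>j\<in>insert i I. A j) = sum f (A i \<union> (\<Union>j\<in>I. A j))" by simp
    also have "\<dots> \<le> sum f (A i) + sum f (\<Union>j\<in>I. A j)"
    proof -
      have "finite (A i)" "finite (\<Union>j\<in>I. A j)" using insert by auto
      then have "sum f (A i \<union> (\<Union>j\<in>I. A j)) = sum f (A i) + sum f (\<Union>j\<in>I. A j) - sum f (A i \<inter> (\<Union>j\<in>I. A j))"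
        by (rule sum_Un)
      moreover have "0 \<le> sum f (A i \<inter> (\<Union>j\<in>I. A j))" using f by (simp add: sum_nonneg)
      ultimately show ?thesis by simp
    qed
    also have "\<dots> \<le> sum f (A i) + (\<Sum>j\<in>I. sum f (A j))" using insert by simp
    also have "\<dots> = (\<Sum>j\<in>insert i I. sum f (A j))" using insert by simp
    finally show ?case .
  qed
  finally show ?thesis .
qed

lemma geom_tail:
  fixes s :: real
  assumes "0 \<le> s" "s \<le> 1/2"
  shows "(\<Sum>L=M..N. s ^ L) \<le> 2 * s ^ M"
proof -
  have "(\<Sum>L=M..N. s ^ L) = (if N < M then 0 else (s ^ M - s ^ Suc N) / (1 - s))"
    using assms by (simp add: sum_gp)
  also have "\<dots> \<le> 2 * s ^ M"
  proof (cases "N < M")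
    case True then show ?thesis using assms by simp
  next
    case False
    have "(s ^ M - s ^ Suc N) / (1 - s) \<le> s ^ M / (1 - s)"
      using assms by (intro divide_right_mono) auto
    also have "\<dots> \<le> s ^ M / (1/2)" using assms by (intro divide_left_mono) auto
    finally show ?thesis using False by simp
  qed
  finally show ?thesis .
qed

lemma geo_int_sum:
  fixes u :: real
  assumes u: "0 \<le> u" "u \<le> 1/2" and A: "finite A"
  shows "(\<Sum>a\<in>A. u ^ nat \<bar>a - c\<bar>) \<le> 4"
proof -
  have sm: "summable (\<lambda>k. u ^ k)" using u by (intro summable_geometric) auto
  have sg: "suminf (\<lambda>k::nat. u ^ k) = 1 / (1 - u)" using u by (intro suminf_geometric) auto
  have sg2: "1 / (1 - u) \<le> 2" using u by (simp add: field_simps)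
  have half: "(\<Sum>a\<in>B. u ^ g a) \<le> 2" if "finite B" "inj_on g B" for B and g :: "int \<Rightarrow> nat"
  proof -
    have "(\<Sum>a\<in>B. u ^ g a) = (\<Sum>k\<in>g ` B. u ^ k)" using that by (simp add: sum.reindex)
    also have "\<dots> \<le> suminf (\<lambda>k. u ^ k)" using sm that u by (intro sum_le_suminf) auto
    finally show ?thesis using sg sg2 by simp
  qed
  have "(\<Sum>a\<in>A. u ^ nat \<bar>a - c\<bar>) = (\<Sum>a\<in>A \<inter> {a. c \<le> a}. u ^ nat \<bar>a - c\<bar>) + (\<Sum>a\<in>A \<inter> - {a. c \<le> a}. u ^ nat \<bar>a - c\<bar>)"
    using A by (rule sum.Int_Diff[of A _ "{a. c \<le> a}", unfolded Diff_eq])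
  also have "(\<Sum>a\<in>A \<inter> {a. c \<le> a}. u ^ nat \<bar>a - c\<bar>) \<le> 2"
    using A by (intro half) (auto simp: inj_on_def)
  also have "(\<Sum>a\<in>A \<inter> - {a. c \<le> a}. u ^ nat \<bar>a - c\<bar>) \<le> 2"
    using A by (intro half) (auto simp: inj_on_def)
  finally show ?thesis by simp
qed



definition enc :: "code \<Rightarrow> (int \<times> int) set" where
  "enc e = {fst e, oth e}"

lemma box_eq: "box n m = {- int n..int n} \<times> {- int m..int m}"
  by (auto simp: box_def)

lemma finite_box: "finite (box n m)"
  by (simp add: box_eq)

lemma bc_sub: "bc n m \<subseteq> box n m \<times> UNIV"
  by (auto simp: bc_def)

lemma finite_bc: "finite (bc n m)"
  using finite_subset[OF bc_sub] finite_box by auto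

lemma adj_code:
  assumes "a \<in> box n m" "b \<in> box n m" "lattice_adj a b"
  shows "\<exists>e\<in>bc n m. (fst e = a \<and> oth e = b) \<or> (fst e = b \<and> oth e = a)"
proof -
  obtain a1 a2 b1 b2 where ab: "a = (a1, a2)" "b = (b1, b2)" by (metis prod.collapse)
  have "\<bar>a1 - b1\<bar> + \<bar>a2 - b2\<bar> = 1" using assms(3) by (simp add: lattice_adj_def ab)
  then have "(b1 = a1 + 1 \<and> b2 = a2) \<or> (a1 = b1 + 1 \<and> b2 = a2) \<or> (b1 = a1 \<and> b2 = a2 + 1) \<or> (b1 = a1 \<and> a2 = b2 + 1)"
    by arith
  then show ?thesis
  proof (elim disjE)
    assume h: "b1 = a1 + 1 \<and> b2 = a2"
    show ?thesis using assms h by (intro bexI[of _ "((a1, a2), True)"]) (auto simp: bc_def oth_def ab)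
  next
    assume h: "a1 = b1 + 1 \<and> b2 = a2"
    show ?thesis using assms h by (intro bexI[of _ "((b1, b2), True)"]) (auto simp: bc_def oth_def ab)
  next
    assume h: "b1 = a1 \<and> b2 = a2 + 1"
    show ?thesis using assms h by (intro bexI[of _ "((a1, a2), False)"]) (auto simp: bc_def oth_def ab)
  next
    assume h: "b1 = a1 \<and> a2 = b2 + 1"
    show ?thesis using assms h by (intro bexI[of _ "((b1, b2), False)"]) (auto simp: bc_def oth_def ab)
  qed
qed

lemma const_along:
  assumes W: "W \<subseteq> box n m"
    and f: "\<forall>e\<in>bc n m. fst e \<in> W \<longrightarrow> oth e \<in> W \<longrightarrow> f (fst e) = f (oth e)"
    and uv: "(u, v) \<in> (Wrel W)\<^sup>*"
  shows "f u = f v"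
  using uv
proof (induction rule: rtrancl_induct)
  case base then show ?case by simp
next
  case (step b c)
  then have bc: "b \<in> W" "c \<in> W" "lattice_adj b c" by (auto simp: Wrel_def)
  then obtain e where e: "e \<in> bc n m" "(fst e = b \<and> oth e = c) \<or> (fst e = c \<and> oth e = b)"
    using adj_code[of b n m c] W by blast
  have "f b = f c" using f e bc by auto
  then show ?case using step(3) by simp
qed

lemma determ:
  assumes x: "x \<in> box n m" and y: "y \<in> box n m" and mn: "m \<le> n" and nj: "\<not> joined S x y"
  shows "\<exists>w. w \<noteq> [] \<and> hd w \<in> bc n m \<and> set w \<subseteq> {e \<in> bc n m. enc e \<notin> S}
     \<and> successively Rc w \<and> length w + 1 \<le> 2 * card (set w)
     \<and> ((\<bar>fst x - fst (fst (hd w))\<bar> \<le> int (length w) \<and> \<bar>snd x - snd (fst (hd w))\<bar> \<le> int (length w))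
        \<or> (\<bar>fst y - fst (fst (hd w))\<bar> \<le> int (length w) \<and> \<bar>snd y - snd (fst (hd w))\<bar> \<le> int (length w))
        \<or> int m \<le> int (length w))"
proof -
  define A where "A = {v. joined S x v}"
  define D where "D = {e \<in> bc n m. (fst e \<in> A) \<noteq> (oth e \<in> A)}"
  have xA: "x \<in> A" by (simp add: A_def joined_def)
  have yA: "y \<notin> A" using nj by (simp add: A_def)
  have Dcl: "D \<subseteq> {e \<in> bc n m. enc e \<notin> S}"
  proof
    fix e assume eD: "e \<in> D"
    have "enc e \<notin> S"
    proof
      assume eS: "enc e \<in> S"
      have "(fst e, oth e) \<in> {(u, v). {u, v} \<in> S}" using eS by (simp add: enc_def)
      moreover have "(oth e, fst e) \<in> {(u, v). {u, v} \<in> S}" using eS by (simp add: enc_def insert_commute)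
      ultimately show False using eD
        by (auto simp: D_def A_def joined_def intro: rtrancl_into_rtrancl)
    qed
    then show "e \<in> {e \<in> bc n m. enc e \<notin> S}" using eD by (simp add: D_def)
  qed
  have FED: "FE n m D" unfolding FE_def
  proof (intro allI impI)
    fix a b assume ab: "- int n \<le> a" "a < int n" "- int m \<le> b" "b < int m"
    have "((a, b), True) \<in> bc n m" "((a, b + 1), True) \<in> bc n m"
         "((a, b), False) \<in> bc n m" "((a + 1, b), False) \<in> bc n m"
      using ab by (auto simp: bc_def box_def oth_def)
    then show "fe D (a, b)" by (auto simp: fe_def D_def oth_def)
  qed
  have finD: "finite D" using finite_bc by (simp add: D_def)
  have "(\<lambda>v. sig n m D v \<noteq> (v \<in> A)) x = (\<lambda>v. sig n m D v \<noteq> (v \<in> A)) y"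
  proof (rule const_along[of "box n m" n m])
    show "\<forall>e\<in>bc n m. fst e \<in> box n m \<longrightarrow> oth e \<in> box n m \<longrightarrow>
      (sig n m D (fst e) \<noteq> (fst e \<in> A)) = (sig n m D (oth e) \<noteq> (oth e \<in> A))"
    proof (intro ballI impI)
      fix e assume e: "e \<in> bc n m"
      have "(sig n m D (fst e) \<noteq> sig n m D (oth e)) = (e \<in> D)" using sig_pot[OF FED e] .
      then show "(sig n m D (fst e) \<noteq> (fst e \<in> A)) = (sig n m D (oth e) \<noteq> (oth e \<in> A))"
        using e by (auto simp: D_def)
    qed
    show "(x, y) \<in> (Wrel (box n m))\<^sup>*" using box_conn[OF x y mn] .
  qed simp
  then have sD: "sig n m D x \<noteq> sig n m D y" using xA yA by auto
  obtain C where C: "C \<subseteq> D" "conn C" "FE n m C" "sig n m C x \<noteq> sig n m C y"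
    using decomp[OF finD FED sD] by blast
  obtain e0 where e0: "e0 \<in> C" "\<forall>e\<in>C. (e0, e) \<in> (RD C)\<^sup>*" using C(2) by (auto simp: conn_def)
  have finC: "finite C" using finD C(1) finite_subset by blast
  obtain w where w: "w \<noteq> []" "hd w = e0" "set w = C" "successively Rc w" "length w + 1 \<le> 2 * card C"
    using cover[OF finC e0] by blast
  have e0bc: "e0 \<in> bc n m" using e0(1) C(1) D_def by auto
  define z where "z = fst e0"
  define L where "L = int (length w)"
  have zb: "z \<in> box n m" using e0bc by (simp add: bc_def z_def)
  have loc: "(\<bar>fst x - fst z\<bar> \<le> L \<and> \<bar>snd x - snd z\<bar> \<le> L)
        \<or> (\<bar>fst y - fst z\<bar> \<le> L \<and> \<bar>snd y - snd z\<bar> \<le> L) \<or> int m \<le> L"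
  proof (rule ccontr)
    assume nl: "\<not> ?thesis"
    have xW: "x \<in> Wav n m z L" and yW: "y \<in> Wav n m z L" using nl x y by (auto simp: Wav_def)
    have Lm: "L < int m" using nl by auto
    have path: "(x, y) \<in> (Wrel (Wav n m z L))\<^sup>*" using avoid[OF zb Lm mn xW yW] .
    obtain ws where ws: "w = e0 # ws" using w(1,2) by (metis list.collapse)
    have "sig n m C x = sig n m C y"
    proof (rule const_along[of "Wav n m z L" n m _ x y])
      show "Wav n m z L \<subseteq> box n m" by (auto simp: Wav_def)
      show "\<forall>e\<in>bc n m. fst e \<in> Wav n m z L \<longrightarrow> oth e \<in> Wav n m z L \<longrightarrow> sig n m C (fst e) = sig n m C (oth e)"
      proof (intro ballI impI)
        fix e assume e: "e \<in> bc n m" "fst e \<in> Wav n m z L"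
        have "e \<notin> C"
        proof
          assume "e \<in> C"
          then have "e \<in> set (e0 # ws)" using w(3) ws by simp
          then have "\<bar>fst (fst e) - fst (fst e0)\<bar> \<le> int (length ws) \<and> \<bar>snd (fst e) - snd (fst e0)\<bar> \<le> int (length ws)"
            using walk_loc w(4) ws by blast
          then show False using e(2) by (auto simp: Wav_def z_def L_def ws)
        qed
        then show "sig n m C (fst e) = sig n m C (oth e)" using sig_pot[OF C(3) e(1)] by auto
      qed
      show "(x, y) \<in> (Wrel (Wav n m z L))\<^sup>*" using path .
    qed
    then show False using C(4) by simp
  qed
  show ?thesis
    apply (rule exI[of _ w])
    using w Dcl C(1) e0bc loc by (auto simp: z_def L_def)
qed



definition WK :: "code \<Rightarrow> nat \<Rightarrow> code list set" where
  "WK e0 L = {w. length w = L \<and> w \<noteq> [] \<and> hd w = e0 \<and> successively Rc w}"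

definition Dset :: "code set" where
  "Dset = ({-1, 0, 1} \<times> {-1, 0, 1}) \<times> UNIV"

definition stp :: "code \<Rightarrow> code \<Rightarrow> code" where
  "stp e d = ((fst (fst e) + fst (fst d), snd (fst e) + snd (fst d)), snd d)"

lemma card_Dset: "card Dset = 18"
  by (simp add: Dset_def card_cartesian_product)

lemma finite_Dset: "finite Dset"
  by (simp add: Dset_def)

lemma WK_step:
  "WK e0 (Suc (Suc k)) \<subseteq> (\<lambda>(w, d). w @ [stp (last w) d]) ` (WK e0 (Suc k) \<times> Dset)"
proof
  fix w' assume w': "w' \<in> WK e0 (Suc (Suc k))"
  define w where "w = butlast w'"
  define e where "e = last w'"
  have ne: "w' \<noteq> []" using w' by (auto simp: WK_def)
  have split: "w' = w @ [e]" using ne by (simp add: w_def e_def)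
  have lw: "length w = Suc k" using w' by (simp add: WK_def w_def)
  then have wne: "w \<noteq> []" by auto
  have hw: "hd w = e0" using w' split wne by (auto simp: WK_def)
  have sw: "successively Rc w" and R: "Rc (last w) e"
    using w' split wne by (auto simp: WK_def successively_append_iff)
  define d where "d = ((fst (fst e) - fst (fst (last w)), snd (fst e) - snd (fst (last w))), snd e)"
  have m1: "x \<in> {-1, 0, 1}" if "\<bar>x\<bar> \<le> 1" for x :: int using that by (simp; arith)
  have a1: "fst (fst e) - fst (fst (last w)) \<in> {-1, 0, 1}"
    by (intro m1) (use R in \<open>auto simp: Rc_def abs_minus_commute\<close>)
  have a2: "snd (fst e) - snd (fst (last w)) \<in> {-1, 0, 1}"
    by (intro m1) (use R in \<open>auto simp: Rc_def abs_minus_commute\<close>)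
  have dD: "d \<in> Dset" unfolding Dset_def d_def
    by (simp only: mem_Times_iff fst_conv snd_conv UNIV_I a1 a2 simp_thms)
  have "stp (last w) d = e" by (simp add: stp_def d_def)
  then have "w' = (\<lambda>(w, d). w @ [stp (last w) d]) (w, d)" using split by simp
  moreover have "w \<in> WK e0 (Suc k)" using lw wne hw sw by (simp add: WK_def)
  ultimately show "w' \<in> (\<lambda>(w, d). w @ [stp (last w) d]) ` (WK e0 (Suc k) \<times> Dset)"
    using dD by (intro image_eqI[where x="(w, d)"]) auto
qed

lemma WK_bound: "finite (WK e0 (Suc k)) \<and> card (WK e0 (Suc k)) \<le> 18 ^ k"
proof (induction k)
  case 0
  have "WK e0 (Suc 0) = {[e0]}"
  proof (intro set_eqI iffI)
    fix w assume "w \<in> WK e0 (Suc 0)"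
    then have "length w = 1" "hd w = e0" by (auto simp: WK_def)
    then show "w \<in> {[e0]}" by (cases w) auto
  qed (simp add: WK_def)
  then show ?case by simp
next
  case (Suc k)
  let ?F = "(\<lambda>(w, d). w @ [stp (last w) d]) ` (WK e0 (Suc k) \<times> Dset)"
  have fF: "finite ?F" using Suc finite_Dset by auto
  have "card ?F \<le> card (WK e0 (Suc k) \<times> Dset)" by (rule card_image_le) (use Suc finite_Dset in auto)
  also have "\<dots> = card (WK e0 (Suc k)) * 18" by (simp add: card_cartesian_product card_Dset)
  also have "\<dots> \<le> 18 ^ k * 18" using Suc by simp
  finally have cF: "card ?F \<le> 18 ^ Suc k" by simp
  have "finite (WK e0 (Suc (Suc k)))" using finite_subset[OF WK_step fF] .
  moreover have "card (WK e0 (Suc (Suc k))) \<le> card ?F" using WK_step fF by (rule card_mono[rotated])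
  ultimately show ?case using cF by simp
qed



lemma enc_inj: "inj enc"
  unfolding inj_def
  by (auto simp: enc_def oth_def doubleton_eq_iff split: if_splits)

lemma box_edges_enc: "box_edges n m = enc ` bc n m"
proof
  show "box_edges n m \<subseteq> enc ` bc n m"
  proof
    fix E assume "E \<in> box_edges n m"
    then obtain a b where ab: "E = {a, b}" "a \<in> box n m" "b \<in> box n m" "lattice_adj a b"
      by (auto simp: box_edges_def)
    then obtain e where e: "e \<in> bc n m" "(fst e = a \<and> oth e = b) \<or> (fst e = b \<and> oth e = a)"
      using adj_code by blast
    have "enc e = E" using e(2) ab(1) by (auto simp: enc_def)
    then show "E \<in> enc ` bc n m" using e(1) by blast
  qed
next
  show "enc ` bc n m \<subseteq> box_edges n m"
  proof
    fix E assume "E \<in> enc ` bc n m"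
    then obtain e where e: "e \<in> bc n m" "E = enc e" by blast
    have "lattice_adj (fst e) (oth e)" by (auto simp: lattice_adj_def oth_def)
    moreover have "fst e \<in> box n m" "oth e \<in> box n m" using e(1) by (auto simp: bc_def)
    moreover have "E = {fst e, oth e}" using e(2) by (simp add: enc_def)
    ultimately show "E \<in> box_edges n m" unfolding box_edges_def by blast
  qed
qed

lemma power_bound:
  fixes Q r :: real
  assumes "0 \<le> Q" "Q \<le> r ^ 2" "0 \<le> r" "r \<le> 1" "l \<le> 2 * c"
  shows "Q ^ c \<le> r ^ l"
proof -
  have "Q ^ c \<le> (r ^ 2) ^ c" using assms by (intro power_mono) auto
  also have "\<dots> = r ^ (2 * c)" by (simp add: power_mult)
  also have "\<dots> \<le> r ^ l" using assms by (intro power_decreasing) auto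
  finally show ?thesis .
qed

lemma per_e0:
  fixes s :: real
  assumes s: "0 \<le> s" "s \<le> 1/2" and M: "1 \<le> M"
  shows "(\<Sum>L\<in>{M..N}. \<Sum>w\<in>WK e0 L. (s / 18) ^ length w) \<le> s ^ M / 9"
proof -
  have "(\<Sum>L\<in>{M..N}. \<Sum>w\<in>WK e0 L. (s / 18) ^ length w) \<le> (\<Sum>L\<in>{M..N}. s ^ L / 18)"
  proof (rule sum_mono)
    fix L assume L: "L \<in> {M..N}"
    then obtain k where k: "L = Suc k" using M by (metis Suc_pred atLeastAtMost_iff le_zero_eq not_gr_zero not_one_le_zero)
    have "(\<Sum>w\<in>WK e0 L. (s / 18) ^ length w) = (\<Sum>w\<in>WK e0 L. (s / 18) ^ L)"
      by (rule sum.cong) (auto simp: WK_def)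
    also have "\<dots> = real (card (WK e0 L)) * (s / 18) ^ L" by simp
    also have "\<dots> \<le> 18 ^ k * (s / 18) ^ L"
      using WK_bound[of e0 k] k s by (intro mult_right_mono) auto
    also have "\<dots> = s ^ L / 18" using k by (simp add: power_divide)
    finally show "(\<Sum>w\<in>WK e0 L. (s / 18) ^ length w) \<le> s ^ L / 18" .
  qed
  also have "\<dots> = (\<Sum>L=M..N. s ^ L) / 18" by (simp add: sum_divide_distrib)
  also have "\<dots> \<le> (2 * s ^ M) / 18" using geom_tail[OF s] by (intro divide_right_mono) auto
  finally show ?thesis by simp
qed

lemma spread:
  fixes t :: real
  assumes "0 \<le> t" "t \<le> 1"
  shows "(t ^ 2) ^ max 1 (min (min a b) c) \<le> t * (t ^ a + t ^ b + t ^ c)"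
proof -
  let ?k = "min (min a b) c"
  have "(t ^ 2) ^ max 1 ?k = t ^ (2 * max 1 ?k)" by (simp add: power_mult)
  also have "\<dots> \<le> t ^ (Suc ?k)" using assms by (intro power_decreasing) auto
  also have "\<dots> = t * t ^ ?k" by simp
  also have "t ^ ?k \<le> t ^ a + t ^ b + t ^ c"
  proof -
    have "?k = a \<or> ?k = b \<or> ?k = c" by linarith
    then show ?thesis using assms by (auto simp: add_nonneg_nonneg)
  qed
  then have "t * t ^ ?k \<le> t * (t ^ a + t ^ b + t ^ c)" using assms by (intro mult_left_mono) auto
  finally show ?thesis .
qed

definition dd :: "int \<times> int \<Rightarrow> int \<times> int \<Rightarrow> nat" where
  "dd a z = nat (max \<bar>fst a - fst z\<bar> \<bar>snd a - snd z\<bar>)"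

lemma box_sum:
  fixes t :: real
  assumes t: "0 \<le> t" "t \<le> 1/4"
  shows "(\<Sum>v\<in>box n m. t ^ dd x v) \<le> 16"
proof -
  define u where "u = sqrt t"
  have u0: "0 \<le> u" using t(1) by (simp add: u_def)
  have u2: "u ^ 2 = t" using t(1) by (simp add: u_def)
  have "u ^ 2 \<le> (1/2) ^ 2" using u2 t by (simp add: power2_eq_square)
  then have "u \<le> 1/2" by (rule power2_le_imp_le) simp
  note u = u0 this u2
  have pt: "t ^ dd x v \<le> u ^ nat \<bar>fst v - fst x\<bar> * u ^ nat \<bar>snd v - snd x\<bar>" for v
  proof -
    have "t ^ dd x v = u ^ (2 * dd x v)" using u by (simp add: power_mult)
    also have "\<dots> \<le> u ^ (nat \<bar>fst v - fst x\<bar> + nat \<bar>snd v - snd x\<bar>)"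
      using u by (intro power_decreasing) (auto simp: dd_def)
    also have "\<dots> = u ^ nat \<bar>fst v - fst x\<bar> * u ^ nat \<bar>snd v - snd x\<bar>" by (simp add: power_add)
    finally show ?thesis .
  qed
  have "(\<Sum>v\<in>box n m. t ^ dd x v) \<le> (\<Sum>v\<in>box n m. u ^ nat \<bar>fst v - fst x\<bar> * u ^ nat \<bar>snd v - snd x\<bar>)"
    using pt by (rule sum_mono)
  also have "\<dots> = (\<Sum>a\<in>{- int n..int n}. \<Sum>b\<in>{- int m..int m}. u ^ nat \<bar>a - fst x\<bar> * u ^ nat \<bar>b - snd x\<bar>)"
    by (simp add: box_eq sum.cartesian_product split_beta)
  also have "\<dots> = (\<Sum>a\<in>{- int n..int n}. u ^ nat \<bar>a - fst x\<bar>) * (\<Sum>b\<in>{- int m..int m}. u ^ nat \<bar>b - snd x\<bar>)"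
    by (simp add: sum_product)
  also have "\<dots> \<le> 4 * 4"
    using geo_int_sum[OF u(1,2)] u(1) by (intro mult_mono) (auto intro!: sum_nonneg)
  finally show ?thesis by simp
qed

lemma card_box: "card (box n m) = (2 * n + 1) * (2 * m + 1)"
proof -
  have "card {- int n..int n} = 2 * n + 1" by simp
  moreover have "card {- int m..int m} = 2 * m + 1" by simp
  ultimately show ?thesis by (simp add: box_eq card_cartesian_product)
qed

lemma box_card_bound:
  fixes t lam :: real
  assumes t: "0 < t" "t \<le> exp (- 2 / lam)" "t \<le> 1" and lam: "0 < lam"
    and nm: "lam * ln (real n) \<le> real m" "m \<le> n"
  shows "real (card (box n m)) * t ^ m \<le> 9"
proof (cases "n = 0")
  case True
  then have "m = 0" using nm by simp
  then show ?thesis using True by (simp add: card_box)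
next
  case False
  then have n1: "1 \<le> real n" by simp
  have c: "real (card (box n m)) \<le> 9 * real n ^ 2"
  proof -
    have "real (card (box n m)) = (2 * real n + 1) * (2 * real m + 1)" by (simp add: card_box algebra_simps)
    also have "\<dots> \<le> (3 * real n) * (3 * real n)"
      using n1 nm by (intro mult_mono) auto
    finally show ?thesis by (simp add: power2_eq_square)
  qed
  have "t ^ m = exp (real m * ln t)" using t by (simp add: exp_of_nat_mult)
  also have "\<dots> \<le> exp (- 2 * ln (real n))"
  proof -
    have "ln t \<le> - 2 / lam" using t by (metis ln_exp ln_le_cancel_iff exp_gt_zero)
    then have "real m * ln t \<le> real m * (- 2 / lam)" by (intro mult_left_mono) auto
    also have "\<dots> \<le> - 2 * ln (real n)"
    proof -
      have "ln (real n) \<le> real m / lam" using nm lam by (simp add: field_simps mult.commute)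
      then have "2 * ln (real n) \<le> 2 * (real m / lam)" by simp
      then show ?thesis by (simp add: field_simps)
    qed
    finally show ?thesis by simp
  qed
  also have "\<dots> = 1 / real n ^ 2"
  proof -
    have "2 * ln (real n) = ln (real n ^ 2)" using n1 by (simp add: ln_realpow)
    then have "exp (2 * ln (real n)) = real n ^ 2" using n1 by simp
    then show ?thesis by (simp add: exp_minus inverse_eq_divide)
  qed
  finally have tm: "t ^ m \<le> 1 / real n ^ 2" .
  have "real (card (box n m)) * t ^ m \<le> 9 * real n ^ 2 * (1 / real n ^ 2)"
    using c tm t by (intro mult_mono) auto
  also have "\<dots> = 9" using n1 by simp
  finally show ?thesis .
qed



definition Mv :: "int \<times> int \<Rightarrow> int \<times> int \<Rightarrow> nat \<Rightarrow> int \<times> int \<Rightarrow> nat" where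
  "Mv x y m z = max 1 (min (min (dd x z) (dd y z)) m)"

lemma loc_M:
  assumes "l \<ge> 1"
    and "(\<bar>fst x - fst z\<bar> \<le> int l \<and> \<bar>snd x - snd z\<bar> \<le> int l)
        \<or> (\<bar>fst y - fst z\<bar> \<le> int l \<and> \<bar>snd y - snd z\<bar> \<le> int l) \<or> int m \<le> int l"
  shows "Mv x y m z \<le> l"
  using assms by (auto simp: Mv_def dd_def min_le_iff_disj nat_le_iff)

lemma bad_bound:
  fixes p r s t lam :: real
  assumes x: "x \<in> box n m" and y: "y \<in> box n m" and mn: "m \<le> n"
    and p: "0 \<le> 1 - p" "1 - p \<le> r ^ 2" "0 \<le> p"
    and r: "r = s / 18" and s: "s = t ^ 2" and t: "0 < t" "t \<le> 1/10" "t \<le> exp (- 2 / lam)"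
    and lam: "0 < lam" "lam * ln (real n) \<le> real m"
  shows "perc_prob p (box_edges n m) (\<lambda>S. \<not> joined S x y) \<le> 10 * t"
proof -
  define E where "E = box_edges n m"
  have E: "E = enc ` bc n m" by (simp add: E_def box_edges_enc)
  have finE: "finite E" using E finite_bc by simp
  define N where "N = 2 * card (bc n m)"
  define LOC where "LOC w \<longleftrightarrow> ((\<bar>fst x - fst (fst (hd w))\<bar> \<le> int (length w) \<and> \<bar>snd x - snd (fst (hd w))\<bar> \<le> int (length w))
        \<or> (\<bar>fst y - fst (fst (hd w))\<bar> \<le> int (length w) \<and> \<bar>snd y - snd (fst (hd w))\<bar> \<le> int (length w))
        \<or> int m \<le> int (length w))" for w :: "code list"
  define Cand where "Cand = {w. set w \<subseteq> bc n m \<and> length w \<le> N \<and> w \<noteq> [] \<and> hd w \<in> bc n m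
      \<and> successively Rc w \<and> length w + 1 \<le> 2 * card (set w) \<and> LOC w}"
  have finCand: "finite Cand"
    by (rule finite_subset[OF _ finite_lists_length_le[OF finite_bc, of n m N]]) (auto simp: Cand_def)
  define Av where "Av w = {S. S \<subseteq> E \<and> S \<inter> enc ` set w = {}}" for w :: "code list"
  define wt where "wt S = p ^ card S * (1 - p) ^ card (E - S)" for S :: "(int \<times> int) set set"
  have wt0: "0 \<le> wt S" for S using p by (simp add: wt_def)
  have "t * t \<le> (1/10) * (1/10)" using t by (intro mult_mono) auto
  then have s0: "0 \<le> s" "s \<le> 1/2" using s t by (auto simp: power2_eq_square)
  have r0: "0 \<le> r" "r \<le> 1" using r s0 by auto
  have "perc_prob p E (\<lambda>S. \<not> joined S x y) = sum wt {S. S \<subseteq> E \<and> \<not> joined S x y}"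
    by (simp add: perc_prob_def wt_def)
  also have "\<dots> \<le> (\<Sum>w\<in>Cand. sum wt (Av w))"
  proof (rule sum_union_bound[OF finCand])
    show "finite (Av w)" for w
      by (rule finite_subset[of _ "Pow E"]) (use finE in \<open>auto simp: Av_def\<close>)
    show "0 \<le> wt S" for S by (rule wt0)
    show "{S. S \<subseteq> E \<and> \<not> joined S x y} \<subseteq> (\<Union>w\<in>Cand. Av w)"
    proof
      fix S assume S: "S \<in> {S. S \<subseteq> E \<and> \<not> joined S x y}"
      then obtain w where w: "w \<noteq> []" "hd w \<in> bc n m" "set w \<subseteq> {e \<in> bc n m. enc e \<notin> S}"
        "successively Rc w" "length w + 1 \<le> 2 * card (set w)" "LOC w"
        using determ[OF x y mn, of S] unfolding LOC_def by blast
      have "card (set w) \<le> card (bc n m)" using w(3) finite_bc by (intro card_mono) auto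
      then have "length w \<le> N" using w(5) by (simp add: N_def)
      then have "w \<in> Cand" using w by (auto simp: Cand_def)
      moreover have "S \<in> Av w" using w(3) S by (auto simp: Av_def)
      ultimately show "S \<in> (\<Union>w\<in>Cand. Av w)" by blast
    qed
  qed
  also have "\<dots> \<le> (\<Sum>w\<in>Cand. r ^ length w)"
  proof (rule sum_mono)
    fix w assume w: "w \<in> Cand"
    have sub: "enc ` set w \<subseteq> E" using w E by (auto simp: Cand_def)
    have "sum wt (Av w) = (1 - p) ^ card (enc ` set w)"
      unfolding Av_def wt_def using prob_avoid[OF finE sub, of p] by (simp add: Int_commute)
    also have "card (enc ` set w) = card (set w)"
      using enc_inj by (simp add: card_image inj_on_subset)
    also have "(1 - p) ^ card (set w) \<le> r ^ length w"
      using p r0 w by (intro power_bound) (auto simp: Cand_def)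
    finally show "sum wt (Av w) \<le> r ^ length w" .
  qed
  also have "\<dots> \<le> (\<Sum>z\<in>(SIGMA e0:bc n m. {Mv x y m (fst e0)..N}). \<Sum>w\<in>WK (fst z) (snd z). r ^ length w)"
  proof (rule sum_union_bound)
    show "finite (SIGMA e0:bc n m. {Mv x y m (fst e0)..N})" using finite_bc by auto
    show "finite (WK (fst z) (snd z))" if "z \<in> (SIGMA e0:bc n m. {Mv x y m (fst e0)..N})" for z
    proof -
      have "1 \<le> snd z" using that by (auto simp: Mv_def)
      then obtain k where "snd z = Suc k" by (metis Suc_pred' less_le_trans zero_less_one)
      then show ?thesis using WK_bound[of "fst z" k] by simp
    qed
    show "0 \<le> r ^ length w" for w using r0 by simp
    show "Cand \<subseteq> (\<Union>z\<in>(SIGMA e0:bc n m. {Mv x y m (fst e0)..N}). WK (fst z) (snd z))"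
    proof
      fix w assume w: "w \<in> Cand"
      have "w \<noteq> []" using w by (auto simp: Cand_def)
      then have l1: "1 \<le> length w" by (cases w) auto
      have "Mv x y m (fst (hd w)) \<le> length w"
        using loc_M[OF l1] w by (auto simp: Cand_def LOC_def)
      then have "(hd w, length w) \<in> (SIGMA e0:bc n m. {Mv x y m (fst e0)..N})"
        using w by (auto simp: Cand_def)
      moreover have "w \<in> WK (hd w) (length w)" using w by (auto simp: WK_def Cand_def)
      ultimately show "w \<in> (\<Union>z\<in>(SIGMA e0:bc n m. {Mv x y m (fst e0)..N}). WK (fst z) (snd z))"
        by force
    qed
  qed
  also have "\<dots> = (\<Sum>e0\<in>bc n m. \<Sum>L\<in>{Mv x y m (fst e0)..N}. \<Sum>w\<in>WK e0 L. r ^ length w)"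
  proof -
    define G where "G e0 L = (\<Sum>w\<in>WK e0 L. r ^ length w)" for e0 L
    have "(\<Sum>e0\<in>bc n m. \<Sum>L\<in>{Mv x y m (fst e0)..N}. G e0 L) = (\<Sum>(e0, L)\<in>(SIGMA e0:bc n m. {Mv x y m (fst e0)..N}). G e0 L)"
      by (rule sum.Sigma) (auto simp: finite_bc)
    also have "\<dots> = (\<Sum>z\<in>(SIGMA e0:bc n m. {Mv x y m (fst e0)..N}). G (fst z) (snd z))"
      by (simp add: case_prod_beta)
    finally show ?thesis unfolding G_def by simp
  qed
  also have "\<dots> \<le> (\<Sum>e0\<in>bc n m. s ^ Mv x y m (fst e0) / 9)"
  proof (rule sum_mono)
    fix e0 assume "e0 \<in> bc n m"
    show "(\<Sum>L\<in>{Mv x y m (fst e0)..N}. \<Sum>w\<in>WK e0 L. r ^ length w) \<le> s ^ Mv x y m (fst e0) / 9"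
      unfolding r using per_e0[OF s0] by (simp add: Mv_def)
  qed
  also have "\<dots> \<le> (\<Sum>e0\<in>bc n m. t * (t ^ dd x (fst e0) + t ^ dd y (fst e0) + t ^ m) / 9)"
  proof (rule sum_mono)
    fix e0 assume "e0 \<in> bc n m"
    have "s ^ Mv x y m (fst e0) \<le> t * (t ^ dd x (fst e0) + t ^ dd y (fst e0) + t ^ m)"
      unfolding s Mv_def using t by (intro spread) auto
    then show "s ^ Mv x y m (fst e0) / 9 \<le> t * (t ^ dd x (fst e0) + t ^ dd y (fst e0) + t ^ m) / 9"
      by simp
  qed
  also have "\<dots> \<le> (\<Sum>e0\<in>box n m \<times> (UNIV :: bool set). t * (t ^ dd x (fst e0) + t ^ dd y (fst e0) + t ^ m) / 9)"
  proof (rule sum_mono2)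
    show "finite (box n m \<times> (UNIV :: bool set))" using finite_box by simp
    show "bc n m \<subseteq> box n m \<times> UNIV" by (rule bc_sub)
  qed (use t in auto)
  also have "\<dots> = (\<Sum>v\<in>box n m. 2 * (t * (t ^ dd x v + t ^ dd y v + t ^ m) / 9))"
  proof -
    define h where "h v = t * (t ^ dd x v + t ^ dd y v + t ^ m) / 9" for v
    have "(\<Sum>v\<in>box n m. \<Sum>b\<in>(UNIV :: bool set). h v) = (\<Sum>(v, b)\<in>box n m \<times> (UNIV :: bool set). h v)"
      by (rule sum.cartesian_product)
    then have "(\<Sum>e0\<in>box n m \<times> (UNIV :: bool set). h (fst e0)) = (\<Sum>v\<in>box n m. 2 * h v)"
      by (simp add: split_beta UNIV_bool)
    then show ?thesis by (simp add: h_def)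
  qed
  also have "\<dots> = (2 * t / 9) * ((\<Sum>v\<in>box n m. t ^ dd x v) + (\<Sum>v\<in>box n m. t ^ dd y v) + real (card (box n m)) * t ^ m)"
  proof -
    have "(\<Sum>v\<in>box n m. 2 * (t * (t ^ dd x v + t ^ dd y v + t ^ m) / 9))
        = (\<Sum>v\<in>box n m. (2 * t / 9) * (t ^ dd x v + t ^ dd y v + t ^ m))"
      by (rule sum.cong) (auto simp: algebra_simps)
    also have "\<dots> = (2 * t / 9) * (\<Sum>v\<in>box n m. t ^ dd x v + t ^ dd y v + t ^ m)"
      by (rule sum_distrib_left[symmetric])
    also have "(\<Sum>v\<in>box n m. t ^ dd x v + t ^ dd y v + t ^ m) =
        (\<Sum>v\<in>box n m. t ^ dd x v) + (\<Sum>v\<in>box n m. t ^ dd y v) + real (card (box n m)) * t ^ m"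
      by (simp add: sum.distrib)
    finally show ?thesis .
  qed
  also have "\<dots> \<le> (2 * t / 9) * (16 + 16 + 9)"
  proof (intro mult_left_mono add_mono)
    show "(\<Sum>v\<in>box n m. t ^ dd x v) \<le> 16" using t by (intro box_sum) auto
    show "(\<Sum>v\<in>box n m. t ^ dd y v) \<le> 16" using t by (intro box_sum) auto
    show "real (card (box n m)) * t ^ m \<le> 9" using t lam mn by (intro box_card_bound) auto
  qed (use t in auto)
  also have "\<dots> \<le> 10 * t" using t by simp
  finally show ?thesis by (simp add: E_def)
qed



theorem lemma3p2:
  fixes lam eps :: real
  assumes "0 < lam" "lam \<le> 1" "0 < eps" "eps \<le> 1"
  shows "\<exists>p0 < 1. \<forall>n m :: nat. lam * ln (real n) \<le> real m \<and> m \<le> n \<longrightarrow>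
           (\<forall>p. p0 \<le> p \<and> p \<le> 1 \<longrightarrow>
              (\<forall>x \<in> box n m. \<forall>y \<in> box n m.
                  perc_prob p (box_edges n m) (\<lambda>S. joined S x y) \<ge> 1 - eps))"
proof -
  define t where "t = min (eps / 10) (exp (- 2 / lam))"
  have t: "0 < t" "t \<le> eps / 10" "t \<le> exp (- 2 / lam)" "t \<le> 1/10"
    using assms by (auto simp: t_def)
  define s where "s = t ^ 2"
  define r where "r = s / 18"
  define q where "q = r ^ 2"
  have q0: "0 < q" using t by (simp add: q_def r_def s_def)
  have q1: "q \<le> 1"
  proof -
    have "t * t \<le> 1 * 1" using t by (intro mult_mono) auto
    then have "s \<le> 1" by (simp add: s_def power2_eq_square)
    then have "r \<le> 1" "0 \<le> r" using t by (auto simp: r_def s_def)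
    then have "r * r \<le> 1 * 1" by (intro mult_mono) auto
    then show ?thesis by (simp add: q_def power2_eq_square)
  qed
  show ?thesis
  proof (intro exI[of _ "1 - q"] conjI allI impI ballI)
    show "1 - q < 1" using q0 by simp
    fix n m :: nat assume nm: "lam * ln (real n) \<le> real m \<and> m \<le> n"
    fix p assume p: "1 - q \<le> p \<and> p \<le> 1"
    fix x y assume x: "x \<in> box n m" and y: "y \<in> box n m"
    have "perc_prob p (box_edges n m) (\<lambda>S. \<not> joined S x y) \<le> 10 * t"
      using x y nm p q1 t assms(1) by (intro bad_bound[where r = r and s = s and t = t and lam = lam]) (auto simp: q_def r_def s_def)
    moreover have "perc_prob p (box_edges n m) (\<lambda>S. joined S x y) = 1 - perc_prob p (box_edges n m) (\<lambda>S. \<not> joined S x y)"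
      using finite_bc by (intro perc_compl) (simp add: box_edges_enc)
    ultimately show "perc_prob p (box_edges n m) (\<lambda>S. joined S x y) \<ge> 1 - eps"
      using t by simp
  qed
qed


end
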